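(* Let $p,q\in\mathbf{R}_+^n$, $K_0\in\mathbf{R}_+$, $w\in\mathbf{R}_{++}^n$ and $K=(K_1,\dots,K_n)$ with $K_i\in\mathbf{R}_+$, such that $0\le p_i<q_i\le p_i+K_i$ for $i=1,\dots,n$. Consider the problem \[ \begin{array}{ll} \mbox{maximize} & \mathbf{E}_{\pi}(w^{T}x-K_0)_+ \\ \mbox{subject to} & \mathbf{E}_{\pi}(x_i)=q_i,\\ & \mathbf{E}_{\pi}(x_i-K_i)_+=p_i,\quad i=1,\dots,n, \end{array} \] over all probability measures $\pi$ supported on $\mathbf{R}_+^n$ (the asset price vector $x$ having law $\pi$). Then the optimal value of this problem is bounded above by \[ d^{\sup}=\max_{0\le j\le n+1}\; w^{T}p+\sum_{i=1}^n w_i\min(q_i-p_i,\beta_jK_i)-\beta_jK_0, \] where $\beta_j:=(q_j-p_j)/K_j\in[0,1]$ for $j=1,\dots,n$, $\beta_0=0$ and $\beta_{n+1}=1$.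
   Context: $(y)_+=\max(y,0)$. $\mathbf{R}_{++}^n$ denotes vectors with strictly positive components. *)

theory Defs
  imports "HOL-Probability.Probability"
begin

definition d_sup :: "real^'n \<Rightarrow> real^'n \<Rightarrow> real \<Rightarrow> real^'n \<Rightarrow> real^'n \<Rightarrow> real" where
  "d_sup p q K0 K w =
     Max ((\<lambda>b. (\<Sum>i\<in>UNIV. w$i * p$i) + (\<Sum>i\<in>UNIV. w$i * min (q$i - p$i) (b * K$i)) - b * K0)
          ` ({0, 1} \<union> {(q$j - p$j) / K$j | j. True}))"

end

theory Submission
  imports Defs
begin

lemma comb:
  fixes c \<beta> :: "'n::finite \<Rightarrow> real" and K0 :: real
  assumes K0: "K0 \<ge> 0" and c: "\<And>i. c i > 0" and bb: "\<And>i. 0 < \<beta> i \<and> \<beta> i \<le> 1"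
  shows "\<exists>l b. (\<forall>i. 0 \<le> l i \<and> l i \<le> 1) \<and> (\<Sum>i\<in>UNIV. (1 - l i) * c i) \<le> K0
     \<and> b \<in> insert 0 (insert 1 (range \<beta>))
     \<and> (\<Sum>i\<in>UNIV. l i * (c i * \<beta> i)) \<le> (\<Sum>i\<in>UNIV. c i * min (\<beta> i) b) - b * K0"
proof -
  have bpos: "\<And>i. \<beta> i > 0" "\<And>i. \<beta> i \<le> 1" "\<And>i. \<not> \<beta> i \<le> 0" "\<And>i. \<not> 1 < \<beta> i" using bb by (auto simp: not_le not_less)
  define S where "S = insert 0 (insert (1::real) (range \<beta>))"
  define G where "G b = (\<Sum>i\<in>UNIV. if \<beta> i > b then c i else 0)" for b
  define T where "T = {b\<in>S. G b \<le> K0}"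
  have finS: "finite S" by (simp add: S_def)
  have "G 1 = 0" unfolding G_def using bb by (intro sum.neutral) (metis not_less)
  hence "1 \<in> T" using K0 by (simp add: T_def S_def)
  have finT: "finite T" using finS by (simp add: T_def)
  define bs where "bs = Min T"
  have bsT: "bs \<in> T" using finT \<open>1 \<in> T\<close> unfolding bs_def by (intro Min_in) auto
  have bsmin: "\<And>b. b \<in> T \<Longrightarrow> bs \<le> b" using finT unfolding bs_def by simp
  have S0: "\<And>x. x \<in> S \<Longrightarrow> x \<ge> 0" using bb by (auto simp: S_def less_imp_le)
  have bs0: "bs \<ge> 0" using bsT S0 by (auto simp: T_def)
  show ?thesis
  proof (cases "bs = 0")
    case True
    then have "G 0 \<le> K0" using bsT by (auto simp: T_def)
    moreover have "G 0 = (\<Sum>i\<in>UNIV. c i)" unfolding G_def using bb by (intro sum.cong) auto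
    ultimately have "(\<Sum>i\<in>UNIV. (1 - 0) * c i) \<le> K0" by simp
    moreover have "(\<Sum>i\<in>UNIV. c i * min (\<beta> i) 0) = 0"
      by (intro sum.neutral) (auto simp: min_def bpos)
    ultimately show ?thesis
      by (intro exI[of _ "\<lambda>i. 0"] exI[of _ 0]) auto
  next
    case False
    hence pos: "bs > 0" using bs0 by simp
    define P where "P = {x\<in>S. x < bs}"
    have finP: "finite P" using finS by (simp add: P_def)
    have "0 \<in> P" using pos by (simp add: P_def S_def)
    define s where "s = Max P"
    have sP: "s \<in> P" using finP \<open>0 \<in> P\<close> unfolding s_def by (intro Max_in) auto
    have sS: "s \<in> S" and sl: "s < bs" using sP by (auto simp: P_def)
    have "s \<notin> T" using bsmin sl by force
    hence Gs: "G s > K0" using sS by (auto simp: T_def)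
    have betw: "\<beta> i > s \<longleftrightarrow> \<beta> i \<ge> bs" for i
    proof
      assume a: "\<beta> i > s"
      show "\<beta> i \<ge> bs"
      proof (rule ccontr)
        assume "\<not> \<beta> i \<ge> bs"
        hence "\<beta> i \<in> P" by (auto simp: P_def S_def)
        hence "\<beta> i \<le> s" using finP unfolding s_def by simp
        thus False using a by simp
      qed
    qed (use sl in auto)
    define Hc where "Hc = G bs"
    define E where "E = (\<Sum>i\<in>UNIV. if \<beta> i = bs then c i else 0)"
    have "G s = (\<Sum>i\<in>UNIV. (if \<beta> i > bs then c i else 0) + (if \<beta> i = bs then c i else 0))"
      unfolding G_def using betw by (intro sum.cong) auto
    hence GsE: "G s = Hc + E" by (simp add: sum.distrib Hc_def G_def E_def)
    have HK: "Hc \<le> K0" using bsT by (simp add: T_def Hc_def)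
    have Epos: "E > 0" using GsE Gs HK by simp
    define th where "th = (K0 - Hc) / E"
    have th0: "th \<ge> 0" using HK Epos by (simp add: th_def)
    have th1: "th \<le> 1" using Epos GsE Gs by (simp add: th_def)
    have thE: "th * E = K0 - Hc" using Epos by (simp add: th_def)
    define l where "l i = (if \<beta> i < bs then 1 else if \<beta> i > bs then 0 else 1 - th)" for i
    have lb: "\<forall>i. 0 \<le> l i \<and> l i \<le> 1" using th0 th1 by (simp add: l_def)
    have "(\<Sum>i\<in>UNIV. (1 - l i) * c i) = (\<Sum>i\<in>UNIV. (if \<beta> i > bs then c i else 0) + th * (if \<beta> i = bs then c i else 0))"
      by (intro sum.cong) (auto simp: l_def)
    also have "\<dots> = Hc + th * E" by (simp add: sum.distrib sum_distrib_left Hc_def G_def E_def)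
    finally have s1: "(\<Sum>i\<in>UNIV. (1 - l i) * c i) \<le> K0" using thE by simp
    define A where "A = (\<Sum>i\<in>UNIV. if \<beta> i < bs then c i * \<beta> i else 0)"
    have "(\<Sum>i\<in>UNIV. l i * (c i * \<beta> i)) = (\<Sum>i\<in>UNIV. (if \<beta> i < bs then c i * \<beta> i else 0) + ((1 - th) * bs) * (if \<beta> i = bs then c i else 0))"
      by (intro sum.cong) (auto simp: l_def)
    also have "\<dots> = A + (1 - th) * bs * E" by (simp add: sum.distrib sum_distrib_left A_def E_def)
    finally have s2: "(\<Sum>i\<in>UNIV. l i * (c i * \<beta> i)) = A + (1 - th) * bs * E" .
    have "(\<Sum>i\<in>UNIV. c i * min (\<beta> i) bs) = (\<Sum>i\<in>UNIV. (if \<beta> i < bs then c i * \<beta> i else 0) + bs * (if \<beta> i > s then c i else 0))"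
      using betw by (intro sum.cong) (auto simp: min_def)
    also have "\<dots> = A + bs * G s" by (simp add: sum.distrib sum_distrib_left A_def G_def)
    finally have s3: "(\<Sum>i\<in>UNIV. c i * min (\<beta> i) bs) = A + bs * G s" .
    have "(1 - th) * bs * E = bs * (Hc + E) - bs * (Hc + th * E)" by (simp add: algebra_simps)
    hence "(1 - th) * bs * E = bs * G s - bs * K0" using GsE thE by simp
    hence s4: "(\<Sum>i\<in>UNIV. l i * (c i * \<beta> i)) \<le> (\<Sum>i\<in>UNIV. c i * min (\<beta> i) bs) - bs * K0"
      using s2 s3 by simp
    have "bs \<in> insert 0 (insert 1 (range \<beta>))" using bsT by (simp add: T_def S_def)
    then show ?thesis using lb s1 s4 by blast
  qed
qed

theorem proposition4:
  fixes p q K w :: "real^'n" and K0 :: real and M :: "(real^'n) measure"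
  assumes "K0 \<ge> 0"
    and "\<And>i. w$i > 0"
    and "\<And>i. K$i \<ge> 0"
    and "\<And>i. 0 \<le> p$i \<and> p$i < q$i \<and> q$i \<le> p$i + K$i"
    and "prob_space M" and "sets M = sets borel"
    and "AE x in M. \<forall>i. x$i \<ge> 0"
    and "\<And>i. integrable M (\<lambda>x. x$i)"
    and "\<And>i. integral\<^sup>L M (\<lambda>x. x$i) = q$i"
    and "\<And>i. integrable M (\<lambda>x. max (x$i - K$i) 0)"
    and "\<And>i. integral\<^sup>L M (\<lambda>x. max (x$i - K$i) 0) = p$i"
  shows "integrable M (\<lambda>x. max ((\<Sum>i\<in>UNIV. w$i * x$i) - K0) 0)
    \<and> integral\<^sup>L M (\<lambda>x. max ((\<Sum>i\<in>UNIV. w$i * x$i) - K0) 0) \<le> d_sup p q K0 K w"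
proof -
  note A = assms
  have Kp: "K$i > 0" for i using A(4)[of i] by linarith
  define c where "c i = w$i * K$i" for i
  define be where "be i = (q$i - p$i) / K$i" for i
  have cp: "c i > 0" for i using A(2)[of i] Kp[of i] by (simp add: c_def)
  have bep: "0 < be i \<and> be i \<le> 1" for i
  proof -
    have "q$i - p$i > 0" "q$i - p$i \<le> K$i" using A(4)[of i] by auto
    thus ?thesis using Kp[of i] by (simp add: be_def divide_le_eq_1)
  qed
  obtain l b where lb: "\<forall>i. 0 \<le> l i \<and> l i \<le> 1" and l1: "(\<Sum>i\<in>UNIV. (1 - l i) * c i) \<le> K0"
    and bS: "b \<in> insert 0 (insert 1 (range be))"
    and l2: "(\<Sum>i\<in>UNIV. l i * (c i * be i)) \<le> (\<Sum>i\<in>UNIV. c i * min (be i) b) - b * K0"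
    using comb[of K0 c be, OF A(1) cp bep] by (elim exE conjE) (rule that)
  have cbe: "c i * be i = w$i * (q$i - p$i)" for i using Kp[of i] by (simp add: c_def be_def)
  have cmin: "c i * min (be i) b = w$i * min (q$i - p$i) (b * K$i)" for i
  proof -
    have "K$i * min (be i) b = min (q$i - p$i) (b * K$i)"
    proof -
      have "K$i * min (be i) b = min (K$i * be i) (K$i * b)"
        using Kp[of i] by (simp add: min_mult_distrib_left)
      also have "K$i * be i = q$i - p$i" using Kp[of i] by (simp add: be_def)
      finally show ?thesis by (simp add: mult.commute)
    qed
    thus ?thesis by (simp add: c_def)
  qed
  define f where "f x = max ((\<Sum>i\<in>UNIV. w$i * x$i) - K0) 0" for x :: "real^'n"
  define g where "g x = (\<Sum>i\<in>UNIV. w$i * max (x$i - K$i) 0 + l i * w$i * (x$i - max (x$i - K$i) 0))" for x :: "real^'n"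
  have gi: "integrable M g" unfolding g_def using A(8) A(10) by (intro Bochner_Integration.integrable_sum Bochner_Integration.integrable_add integrable_mult_right integrable_diff) auto
  have gint: "integral\<^sup>L M g = (\<Sum>i\<in>UNIV. w$i * p$i + l i * w$i * (q$i - p$i))"
    unfolding g_def using A(8-11)
    by (simp add: Bochner_Integration.integral_sum integrable_diff integral_add integral_diff)
  have fm: "f \<in> borel_measurable M"
  proof -
    have "f \<in> borel_measurable borel" unfolding f_def by measurable
    thus ?thesis by (subst measurable_cong_sets[OF A(6) refl])
  qed
  have bound: "AE x in M. 0 \<le> f x \<and> f x \<le> g x"
    using A(7)
  proof eventually_elim
    case (elim x)
    have t1: "w$i * x$i \<le> w$i * max (x$i - K$i) 0 + l i * w$i * (x$i - max (x$i - K$i) 0) + (1 - l i) * c i" for i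
    proof -
      have "(1 - l i) * w$i * (x$i - max (x$i - K$i) 0) \<le> (1 - l i) * w$i * K$i"
        using lb A(2)[of i] by (intro mult_left_mono) auto
      thus ?thesis by (simp add: c_def algebra_simps)
    qed
    have "(\<Sum>i\<in>UNIV. w$i * x$i) \<le> (\<Sum>i\<in>UNIV. w$i * max (x$i - K$i) 0 + l i * w$i * (x$i - max (x$i - K$i) 0) + (1 - l i) * c i)"
      by (intro sum_mono t1)
    also have "\<dots> = g x + (\<Sum>i\<in>UNIV. (1 - l i) * c i)" by (simp add: g_def sum.distrib)
    finally have "(\<Sum>i\<in>UNIV. w$i * x$i) - K0 \<le> g x" using l1 by simp
    moreover have "0 \<le> g x" unfolding g_def
    proof (intro sum_nonneg add_nonneg_nonneg)
      fix i
      show "0 \<le> w$i * max (x$i - K$i) 0" using A(2)[of i] by simp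
      show "0 \<le> l i * w$i * (x$i - max (x$i - K$i) 0)" using lb A(2)[of i] elim A(3)[of i]
        by (intro mult_nonneg_nonneg) (auto simp: max_def)
    qed
    ultimately show ?case by (simp add: f_def)
  qed
  have fi: "integrable M f"
    by (rule Bochner_Integration.integrable_bound[OF gi fm], rule eventually_mono[OF bound]) auto
  have "integral\<^sup>L M f \<le> integral\<^sup>L M g"
    by (rule integral_mono_AE[OF fi gi], rule eventually_mono[OF bound]) auto
  also have "\<dots> = (\<Sum>i\<in>UNIV. w$i * p$i) + (\<Sum>i\<in>UNIV. l i * (c i * be i))"
    unfolding gint by (simp add: sum.distrib cbe mult.assoc)
  also have "\<dots> \<le> (\<Sum>i\<in>UNIV. w$i * p$i) + (\<Sum>i\<in>UNIV. w$i * min (q$i - p$i) (b * K$i)) - b * K0"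
    using l2 by (simp add: cmin)
  also have "\<dots> \<le> d_sup p q K0 K w"
    unfolding d_sup_def
  proof (rule Max_ge)
    have "{(q$j - p$j) / K$j | j. True} = range be" by (auto simp: be_def)
    thus "finite ((\<lambda>b. (\<Sum>i\<in>UNIV. w$i * p$i) + (\<Sum>i\<in>UNIV. w$i * min (q$i - p$i) (b * K$i)) - b * K0)
          ` ({0, 1} \<union> {(q$j - p$j) / K$j | j. True}))" by simp
    have "b \<in> {0, 1} \<union> {(q$j - p$j) / K$j | j. True}" using bS by (auto simp: be_def)
    thus "(\<Sum>i\<in>UNIV. w$i * p$i) + (\<Sum>i\<in>UNIV. w$i * min (q$i - p$i) (b * K$i)) - b * K0 \<in> (\<lambda>b. (\<Sum>i\<in>UNIV. w$i * p$i) + (\<Sum>i\<in>UNIV. w$i * min (q$i - p$i) (b * K$i)) - b * K0)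
          ` ({0, 1} \<union> {(q$j - p$j) / K$j | j. True})" by blast
  qed
  finally show ?thesis using fi unfolding f_def[abs_def] by simp
qed

end
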